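(* Let $n,t'$ be positive integers and $\sigma\in\mathcal{S}_{n+t'}$. Then the symbol $n+t'+1$ can be inserted at some position of $\sigma$ to obtain a permutation $\sigma'\in\mathcal{S}_{n+t'+1}$ such that $\sum_{i=1}^{t'+1}\sigma'^{-1}(n+i)\equiv 0\pmod{n+1}$.
   Context: $\mathcal{S}_N$ is the set of permutations of $[N]=\{1,\ldots,N\}$ written as sequences; $\sigma'^{-1}(k)$ denotes the position of the value $k$ in $\sigma'$. *)

theory Defs
  imports "HOL-Combinatorics.Multiset_Permutations"
begin

text \<open>1-based position of value v in a sequence xs (assumed to occur exactly once),
  i.e. the inverse permutation sigma^{-1}(v).\<close>
definition pos_of :: "nat list \<Rightarrow> nat \<Rightarrow> nat" where
  "pos_of xs v = (THE i. i < length xs \<and> xs ! i = v) + 1"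

definition insert_at :: "nat \<Rightarrow> nat \<Rightarrow> nat list \<Rightarrow> nat list" where
  "insert_at k x xs = take k xs @ [x] @ drop k xs"

end

theory Submission
  imports Defs
begin

lemma pos_of_nth:
  assumes "distinct xs" "i < length xs"
  shows "pos_of xs (xs ! i) = i + 1"
proof -
  have "(THE j. j < length xs \<and> xs ! j = xs ! i) = i"
    by (rule the_equality) (use assms in \<open>auto simp: nth_eq_iff_index_eq\<close>)
  then show ?thesis by (simp add: pos_of_def)
qed

lemma ins_len: "k \<le> length xs \<Longrightarrow> length (insert_at k x xs) = length xs + 1"
  by (simp add: insert_at_def)

lemma ins_lt: "i < k \<Longrightarrow> k \<le> length xs \<Longrightarrow> insert_at k x xs ! i = xs ! i"
  by (simp add: insert_at_def nth_append)

lemma ins_k: "k \<le> length xs \<Longrightarrow> insert_at k x xs ! k = x"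
  by (simp add: insert_at_def nth_append)

lemma ins_ge: "k \<le> i \<Longrightarrow> i < length xs \<Longrightarrow> insert_at k x xs ! Suc i = xs ! i"
  by (simp add: insert_at_def nth_append min_def Suc_diff_le)

lemma ins_set: "set (insert_at k x xs) = insert x (set xs)"
proof -
  have "set xs = set (take k xs) \<union> set (drop k xs)"
    by (metis append_take_drop_id set_append)
  then show ?thesis by (auto simp: insert_at_def)
qed

lemma ins_distinct: "distinct xs \<Longrightarrow> x \<notin> set xs \<Longrightarrow> distinct (insert_at k x xs)"
proof -
  assume d: "distinct xs" and x: "x \<notin> set xs"
  have "distinct (take k xs @ drop k xs)" using d by simp
  then have "distinct (take k xs)" "distinct (drop k xs)" "set (take k xs) \<inter> set (drop k xs) = {}"
    by (simp_all only: distinct_append)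
  moreover have "x \<notin> set (take k xs)" "x \<notin> set (drop k xs)"
    using x by (meson in_set_takeD in_set_dropD)+
  ultimately show ?thesis by (auto simp: insert_at_def)
qed

lemma discrete_ivt:
  fixes g :: "nat \<Rightarrow> nat"
  assumes "\<forall>k<m. g k \<le> g (Suc k) \<and> g (Suc k) \<le> g k + 1" "g 0 \<le> v" "v \<le> g m"
  shows "\<exists>k\<le>m. g k = v"
  using assms
proof (induction m)
  case 0 then show ?case by auto
next
  case (Suc m)
  show ?case
  proof (cases "v \<le> g m")
    case True
    with Suc show ?thesis by (metis le_Suc_eq less_SucI)
  next
    case False
    with Suc.prems have "g (Suc m) = v" by fastforce
    then show ?thesis by blast
  qed
qed

theorem lemma7:
  fixes n t' :: nat and \<sigma> :: "nat list"
  assumes "n > 0" and "t' > 0"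
    and "\<sigma> \<in> permutations_of_set {1..n + t'}"
  shows "\<exists>k \<le> n + t'. 
           insert_at k (n + t' + 1) \<sigma> \<in> permutations_of_set {1..n + t' + 1} \<and>
           (\<Sum>i = 1..t' + 1. pos_of (insert_at k (n + t' + 1) \<sigma>) (n + i)) mod (n + 1) = 0"
proof -
  define N where "N = n + t'"
  have setS: "set \<sigma> = {1..N}" and dS: "distinct \<sigma>"
    using assms(3) by (auto simp: permutations_of_set_def N_def)
  have lenS: "length \<sigma> = N" using distinct_card[OF dS] setS by simp
  define p where "p v = pos_of \<sigma> v" for v
  define I where "I = {1..t'}"
  have pprop: "p (n+i) \<ge> 1 \<and> p (n+i) \<le> N \<and> \<sigma> ! (p (n+i) - 1) = n+i" if "i \<in> I" for i
  proof -
    have "n+i \<in> set \<sigma>" using that setS by (auto simp: I_def N_def)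
    then obtain j where j: "j < N" "\<sigma> ! j = n+i" by (metis in_set_conv_nth lenS)
    then have "p (n+i) = j+1" using pos_of_nth[OF dS, of j] lenS by (simp add: p_def)
    then show ?thesis using j by simp
  qed
  have pinj: "inj_on (\<lambda>i. p (n+i)) I"
  proof (rule inj_onI)
    fix a b assume "a \<in> I" "b \<in> I" "p (n+a) = p (n+b)"
    then show "a = b" using pprop[of a] pprop[of b] by (metis add_left_cancel)
  qed
  define c where "c k = card {i\<in>I. k < p (n+i)}" for k
  define S where "S k = (\<Sum>i\<in>I. p (n+i)) + c k + k + 1" for k
  have posins: "pos_of (insert_at k (N+1) \<sigma>) (n+i) = (if p (n+i) \<le> k then p (n+i) else p (n+i) + 1)"
    if iI: "i \<in> I" and kN: "k \<le> N" for i k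
  proof -
    have dI: "distinct (insert_at k (N+1) \<sigma>)"
      using ins_distinct[OF dS] setS by auto
    have L: "length (insert_at k (N+1) \<sigma>) = N + 1" using ins_len[of k \<sigma>] lenS that by simp
    obtain j where j: "p (n+i) = j + 1" "j < N" "\<sigma> ! j = n+i"
      using pprop[OF iI] by (metis Suc_eq_plus1 Suc_le_eq Suc_pred' le_less_trans less_one not_le)
    show ?thesis
    proof (cases "j < k")
      case True
      then have "insert_at k (N+1) \<sigma> ! j = n+i" using ins_lt[of j k \<sigma>] lenS kN j by simp
      then show ?thesis using pos_of_nth[OF dI, of j] L j True by auto
    next
      case False
      then have "insert_at k (N+1) \<sigma> ! Suc j = n+i" using ins_ge[of k j \<sigma>] lenS j by simp
      then show ?thesis using pos_of_nth[OF dI, of "Suc j"] L j False by auto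
    qed
  qed
  have posk: "pos_of (insert_at k (N+1) \<sigma>) (N+1) = k + 1" if "k \<le> N" for k
  proof -
    have dI: "distinct (insert_at k (N+1) \<sigma>)"
      using ins_distinct[OF dS] setS by auto
    have L: "length (insert_at k (N+1) \<sigma>) = N + 1" using ins_len[of k \<sigma>] lenS that by simp
    show ?thesis using pos_of_nth[OF dI, of k] ins_k[of k \<sigma>] L lenS that by simp
  qed
  have sumeq: "(\<Sum>i = 1..t' + 1. pos_of (insert_at k (N + 1) \<sigma>) (n + i)) = S k" if "k \<le> N" for k
  proof -
    have "(\<Sum>i = 1..t' + 1. pos_of (insert_at k (N + 1) \<sigma>) (n + i))
        = (\<Sum>i\<in>I. pos_of (insert_at k (N + 1) \<sigma>) (n + i)) + (k+1)"
      using posk[OF that] by (simp add: I_def N_def)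
    also have "(\<Sum>i\<in>I. pos_of (insert_at k (N + 1) \<sigma>) (n + i))
        = (\<Sum>i\<in>I. p (n+i) + (if k < p (n+i) then 1 else 0))"
      by (rule sum.cong) (use posins[OF _ that] in auto)
    also have "\<dots> = (\<Sum>i\<in>I. p (n+i)) + c k"
      by (simp add: sum.distrib c_def sum.If_cases I_def Int_def conj_commute)
    finally show ?thesis by (simp add: S_def)
  qed
  have step: "S k \<le> S (Suc k) \<and> S (Suc k) \<le> S k + 1" for k
  proof -
    have fin: "finite I" by (simp add: I_def)
    have split: "{i\<in>I. k < p (n+i)} = {i\<in>I. Suc k < p (n+i)} \<union> {i\<in>I. p (n+i) = Suc k}"
      by auto
    have "c k = c (Suc k) + card {i\<in>I. p (n+i) = Suc k}"
      unfolding c_def split by (rule card_Un_disjoint) (use fin in auto)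
    moreover have "card {i\<in>I. p (n+i) = Suc k} \<le> 1"
    proof -
      have "card {i\<in>I. p (n+i) = Suc k} \<le> card {Suc k}"
        by (rule card_inj_on_le[where f="\<lambda>i. p (n+i)"]) (auto intro: inj_on_subset[OF pinj])
      then show ?thesis by simp
    qed
    ultimately show ?thesis by (simp add: S_def)
  qed
  have c0: "c 0 = t'"
  proof -
    have "{i\<in>I. 0 < p (n+i)} = I" using pprop by fastforce
    then show ?thesis by (simp add: c_def I_def)
  qed
  have cN: "c N = 0"
  proof -
    have "{i\<in>I. N < p (n+i)} = {}" using pprop by fastforce
    then show ?thesis unfolding c_def by (simp only: card.empty)
  qed
  have SN: "S N = S 0 + n" unfolding S_def c0 cN by (simp add: N_def)
  define v where "v = ((S 0 + n) div (n+1)) * (n+1)"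
  have v1: "v \<le> S 0 + n" unfolding v_def by (metis div_mult_mod_eq le_add1)
  have "S 0 + n = v + (S 0 + n) mod (n+1)" unfolding v_def by (metis div_mult_mod_eq)
  moreover have "(S 0 + n) mod (n+1) \<le> n" using assms(1)
    by (metis Suc_eq_plus1 less_Suc_eq_le mod_less_divisor zero_less_Suc)
  ultimately have v2: "S 0 \<le> v" by linarith
  obtain k where k: "k \<le> N" "S k = v"
    using discrete_ivt[of N S v] step v1 v2 SN by auto
  have perm: "insert_at k (N+1) \<sigma> \<in> permutations_of_set {1..N+1}"
    using ins_distinct[OF dS, of "N+1" k] setS ins_set[of k "N+1" \<sigma>]
    by (auto simp: permutations_of_set_def)
  have "v mod (n+1) = 0" unfolding v_def by (rule mod_mult_self2_is_0)
  then show ?thesis using k perm sumeq[OF k(1)] unfolding N_def by auto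
qed

end
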